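(* Let $H$ be the system defined in the context, and suppose the underlying graph is a line (path) graph on $N\ge 2$ nodes, with edges $\{i,i+1\}$, $i=1,\dots,N-1$, having susceptances $b_{i,i+1}>0$. Let $\underline{b}$ be the arithmetic mean of these $N-1$ edge susceptances. Then $$\|H\|_2^2\le\frac{\alpha}{2}(N-1)\left(\frac{1}{k_P}+\frac{1}{\tau_Q\left(\frac{c_Q}{2\underline{b}}+k_Q\right)}\right).$$
   Context: $L_B$ is the weighted Laplacian of the graph with edge weights $b_{ik}$. Parameters: $k_P,\tau_P,k_Q,\tau_Q>0$, $\bar b\ge 0$, $c_Q=1+2k_Q\bar b$, $\alpha>0$. $H$ is the LTI system with state $\psi=(\delta,\omega,V)\in\mathbb{R}^{3N}$, input $\mathrm{w}\in\mathbb{R}^{2N}$, output $y$: $$\dot\psi=\begin{bmatrix}0 & I & 0\\ -\frac{k_P}{\tau_P}L_B & -\frac{1}{\tau_P}I & 0\\ 0 & 0 & -\frac{c_Q}{\tau_Q}I-\frac{k_Q}{\tau_Q}L_B\end{bmatrix}\psi+\begin{bmatrix}0&0\\ \frac{1}{\tau_P}I & 0\\ 0 & \frac{1}{\tau_Q}I\end{bmatrix}\mathrm{w},\qquad y=\begin{bmatrix}\sqrt{\alpha}L_B^{1/2} & 0 & 0\\ 0&0&\sqrt{\alpha}L_B^{1/2}\end{bmatrix}\psi,$$ and $\|H\|_2^2$ is the squared $\mathcal{H}_2$ norm of its transfer function (finite since the single zero mode is unobservable and all other modes are stable). *)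

theory Defs
  imports "HOL-Analysis.Analysis"
begin

fun mpow :: "real^'m^'m \<Rightarrow> nat \<Rightarrow> real^'m^'m" where
  "mpow A 0 = mat 1"
| "mpow A (Suc k) = A ** mpow A k"

definition mexp :: "real \<Rightarrow> real^'m^'m \<Rightarrow> real^'m^'m" where
  "mexp t A = (\<Sum>k. (t ^ k / fact k) *\<^sub>R mpow A k)"

text \<open>Weighted graph Laplacian of edge weights b (b i i is ignored).\<close>
definition laplacian :: "('n::finite \<Rightarrow> 'n \<Rightarrow> real) \<Rightarrow> real^'n^'n" where
  "laplacian b = (\<chi> i k. if i = k then (\<Sum>j\<in>UNIV - {i}. b i j) else - b i k)"

definition psd_sqrt :: "real^'n^'n \<Rightarrow> real^'n^'n" where
  "psd_sqrt M = (THE S. transpose S = S \<and> (\<forall>x. 0 \<le> x \<bullet> (S *v x)) \<and> S ** S = M)"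

text \<open>Squared H2 norm of the LTI system (A,B,C) (no feedthrough), in the time domain:
  integral over t \<ge> 0 of the squared Frobenius norm of the impulse response C e^{At} B.
  The value lives in ennreal, so it is \<infinity> if the integral diverges.\<close>
definition h2norm_sq :: "real^'s^'s \<Rightarrow> real^'i^'s \<Rightarrow> real^'s^'o \<Rightarrow> ennreal" where
  "h2norm_sq A B C = (\<integral>\<^sup>+ t. indicator {0..} t * ennreal ((norm (C ** mexp t A ** B))\<^sup>2) \<partial>lborel)"

text \<open>State index: Inl i = delta_i, Inr (Inl i) = omega_i, Inr (Inr i) = V_i.
  Input index: Inl i = first block of w, Inr i = second block. Output index likewise.\<close>
definition sysA :: "real \<Rightarrow> real \<Rightarrow> real \<Rightarrow> real \<Rightarrow> real \<Rightarrow> real^'n::finite^'n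
    \<Rightarrow> real^('n + 'n + 'n)^('n + 'n + 'n)" where
  "sysA kP tauP kQ tauQ cQ L = (\<chi> r c.
     (case r of
        Inl i \<Rightarrow> (case c of Inr (Inl j) \<Rightarrow> (if i = j then 1 else 0) | _ \<Rightarrow> 0)
      | Inr (Inl i) \<Rightarrow> (case c of
            Inl j \<Rightarrow> - (kP / tauP) * L $ i $ j
          | Inr (Inl j) \<Rightarrow> (if i = j then - (1 / tauP) else 0)
          | Inr (Inr j) \<Rightarrow> 0)
      | Inr (Inr i) \<Rightarrow> (case c of
            Inr (Inr j) \<Rightarrow> (if i = j then - (cQ / tauQ) else 0) - (kQ / tauQ) * L $ i $ j
          | _ \<Rightarrow> 0)))"

definition sysB :: "real \<Rightarrow> real \<Rightarrow> real^('n::finite + 'n)^('n + 'n + 'n)" where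
  "sysB tauP tauQ = (\<chi> r c.
     (case (r, c) of
        (Inr (Inl i), Inl j) \<Rightarrow> (if i = j then 1 / tauP else 0)
      | (Inr (Inr i), Inr j) \<Rightarrow> (if i = j then 1 / tauQ else 0)
      | _ \<Rightarrow> 0))"

definition sysC :: "real \<Rightarrow> real^'n::finite^'n \<Rightarrow> real^('n + 'n + 'n)^('n + 'n)" where
  "sysC alpha S = (\<chi> r c.
     (case (r, c) of
        (Inl i, Inl j) \<Rightarrow> sqrt alpha * S $ i $ j
      | (Inr i, Inr (Inr j)) \<Rightarrow> sqrt alpha * S $ i $ j
      | _ \<Rightarrow> 0))"

end

theory Submission
  imports Defs
begin

definition symm :: "real^'n^'n \<Rightarrow> bool" where
  "symm A \<longleftrightarrow> (\<forall>u w. u \<bullet> (A *v w) = (A *v u) \<bullet> w)"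

lemma transpose_symm: "transpose A = A \<Longrightarrow> symm A"
  unfolding symm_def
  by (metis dot_lmul_matrix inner_commute transpose_matrix_vector)

lemma eig_exists:
  fixes A :: "real^'n^'n"
  assumes sy: "symm A" and V: "subspace V" and nz: "V \<noteq> {0}" and inv: "\<And>x. x \<in> V \<Longrightarrow> A *v x \<in> V"
  shows "\<exists>u\<in>V. norm u = 1 \<and> A *v u = (u \<bullet> (A *v u)) *\<^sub>R u"
proof -
  let ?S = "V \<inter> sphere 0 1"
  have cS: "compact ?S"
    by (intro closed_Int_compact closed_subspace V compact_sphere)
  obtain x where x: "x \<in> V" "x \<noteq> 0" using nz V subspace_0 by blast
  have "(1 / norm x) *\<^sub>R x \<in> ?S" using x V by (simp add: subspace_scale)
  hence neS: "?S \<noteq> {}" by blast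
  have cf: "continuous_on ?S (\<lambda>z. z \<bullet> (A *v z))"
    by (intro continuous_intros linear_continuous_on matrix_vector_mul_bounded_linear)
  obtain u where u: "u \<in> ?S" and umax: "\<And>y. y \<in> ?S \<Longrightarrow> y \<bullet> (A *v y) \<le> u \<bullet> (A *v u)"
    using continuous_attains_sup[OF cS neS cf] by blast
  define l where "l = u \<bullet> (A *v u)"
  have uV: "u \<in> V" and un: "norm u = 1" using u by auto
  have bound: "z \<bullet> (A *v z) \<le> l * (norm z)\<^sup>2" if zV: "z \<in> V" for z
  proof (cases "z = 0")
    case True then show ?thesis by simp
  next
    case False
    let ?y = "(1 / norm z) *\<^sub>R z"
    have "?y \<in> ?S" using zV V False by (simp add: subspace_scale)
    hence "?y \<bullet> (A *v ?y) \<le> l" using umax l_def by blast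
    hence "(1 / norm z)^2 * (z \<bullet> (A *v z)) \<le> l"
      by (simp add: matrix_vector_mult_scaleR power2_eq_square algebra_simps)
    hence "(1 / norm z)^2 * (z \<bullet> (A *v z)) * (norm z)^2 \<le> l * (norm z)^2"
      by (simp add: mult_right_mono)
    then show ?thesis using False by (simp add: field_simps)
  qed
  define w where "w = l *\<^sub>R u - A *v u"
  have wV: "w \<in> V" unfolding w_def using uV V inv by (simp add: subspace_diff subspace_scale)
  define c where "c = w \<bullet> (A *v w) - l * (norm w)^2"
  have key: "- 2 * t * (norm w)^2 + t^2 * c \<le> 0" for t
  proof -
    have "u + t *\<^sub>R w \<in> V" using uV wV V by (simp add: subspace_add subspace_scale)
    from bound[OF this] have b: "(u + t *\<^sub>R w) \<bullet> (A *v (u + t *\<^sub>R w)) \<le> l * (norm (u + t *\<^sub>R w))\<^sup>2" .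
    have e1: "(u + t *\<^sub>R w) \<bullet> (A *v (u + t *\<^sub>R w)) = u \<bullet> (A *v u) + 2 * t * (w \<bullet> (A *v u)) + t^2 * (w \<bullet> (A *v w))"
      using sy unfolding symm_def
      by (simp add: matrix_vector_right_distrib matrix_vector_mult_scaleR inner_add_left inner_add_right
          power2_eq_square algebra_simps inner_commute)
    have uu: "u \<bullet> u = 1" using un by (simp add: dot_square_norm)
    have ww: "w \<bullet> w = (norm w)^2" by (simp add: dot_square_norm)
    have "(norm (u + t *\<^sub>R w))\<^sup>2 = (u + t *\<^sub>R w) \<bullet> (u + t *\<^sub>R w)" by (rule power2_norm_eq_inner)
    also have "\<dots> = u \<bullet> u + 2 * t * (u \<bullet> w) + t^2 * (w \<bullet> w)"
      by (simp add: inner_add_left inner_add_right power2_eq_square algebra_simps inner_commute)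
    finally have e2: "(norm (u + t *\<^sub>R w))\<^sup>2 = 1 + 2 * t * (u \<bullet> w) + t^2 * (norm w)^2"
      unfolding uu ww .
    have e3: "w \<bullet> (A *v u) = l * (u \<bullet> w) - (norm w)^2"
    proof -
      have "A *v u = l *\<^sub>R u - w" unfolding w_def by simp
      then show ?thesis by (simp add: inner_diff_right power2_norm_eq_inner inner_commute)
    qed
    show ?thesis using b unfolding e1 e2 e3 l_def[symmetric] c_def
      by (simp add: algebra_simps power2_eq_square)
  qed
  have "w = 0"
  proof (rule ccontr)
    assume "w \<noteq> 0"
    hence p: "(norm w)^2 > 0" by simp
    define t where "t = - ((norm w)^2 / (\<bar>c\<bar> + 1))"
    have "- 2 * t * (norm w)^2 + t^2 * c \<le> 0" by (rule key)
    moreover have "t^2 * c \<ge> - (t^2 * \<bar>c\<bar>)" using mult_left_mono[of "-\<bar>c\<bar>" c "t^2"] by simp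
    moreover have "t^2 * \<bar>c\<bar> < t^2 * (\<bar>c\<bar> + 1)"
    proof -
      have cp: "\<bar>c\<bar> + 1 > 0" by simp
      have "t \<noteq> 0" using p cp unfolding t_def by simp
      then have "t^2 > 0" by simp
      then show ?thesis by simp
    qed
    moreover have "t^2 * (\<bar>c\<bar> + 1) = - t * (norm w)^2"
    proof -
      have g: "(-(n/d))^2 * d = -(-(n/d)) * n" if "d > 0" for d n :: real
        using that by (simp add: power2_eq_square field_simps)
      show ?thesis unfolding t_def by (rule g) simp
    qed
    moreover have "- t * (norm w)^2 > 0" unfolding t_def using p by (simp add: field_simps)
    ultimately show False by linarith
  qed
  hence "A *v u = l *\<^sub>R u" unfolding w_def by simp
  then show ?thesis using uV un l_def by blast
qed

lemma spectral_sub: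
  fixes A :: "real^'n^'n"
  assumes sy: "symm A"
  shows "subspace V \<Longrightarrow> (\<forall>x\<in>V. A *v x \<in> V) \<Longrightarrow>
    \<exists>B. B \<subseteq> V \<and> finite B \<and> (\<forall>u\<in>B. norm u = 1 \<and> A *v u = (u \<bullet> (A *v u)) *\<^sub>R u)
       \<and> pairwise orthogonal B \<and> (\<forall>x\<in>V. x = (\<Sum>u\<in>B. (u \<bullet> x) *\<^sub>R u))"
proof (induction "dim V" arbitrary: V rule: less_induct)
  case less
  show ?case
  proof (cases "V = {0}")
    case True
    then show ?thesis by (intro exI[of _ "{}"]) auto
  next
    case False
    obtain u where uV: "u \<in> V" and un: "norm u = 1" and ue: "A *v u = (u \<bullet> (A *v u)) *\<^sub>R u"
      using eig_exists[OF sy less.prems(1) False] less.prems(2) by blast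
    define l where "l = u \<bullet> (A *v u)"
    have uu: "u \<bullet> u = 1" using un by (simp add: dot_square_norm)
    define V' where "V' = {x\<in>V. u \<bullet> x = 0}"
    have sV': "subspace V'"
      using less.prems(1) unfolding V'_def subspace_def by (auto simp: inner_add_right)
    have iV': "\<forall>x\<in>V'. A *v x \<in> V'"
    proof
      fix x assume x: "x \<in> V'"
      have "u \<bullet> (A *v x) = (A *v u) \<bullet> x" using sy unfolding symm_def by blast
      also have "\<dots> = l * (u \<bullet> x)" using ue unfolding l_def[symmetric] by simp
      also have "\<dots> = 0" using x V'_def by simp
      finally show "A *v x \<in> V'" using x less.prems(2) V'_def by auto
    qed
    have sub: "V' \<subset> V"
    proof -
      have "u \<notin> V'" using uu unfolding V'_def by auto
      then show ?thesis using uV unfolding V'_def by blast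
    qed
    have "dim V' < dim V"
    proof -
      have "dim V' \<le> dim V" using sub by (simp add: dim_subset)
      moreover have "dim V' \<noteq> dim V"
        using subspace_dim_equal[OF sV' less.prems(1)] sub by auto
      ultimately show ?thesis by simp
    qed
    then obtain B' where B': "B' \<subseteq> V'" "finite B'"
      "\<forall>w\<in>B'. norm w = 1 \<and> A *v w = (w \<bullet> (A *v w)) *\<^sub>R w"
      "pairwise orthogonal B'" "\<forall>x\<in>V'. x = (\<Sum>w\<in>B'. (w \<bullet> x) *\<^sub>R w)"
      using less.hyps[OF _ sV' iV'] by blast
    have uB': "u \<notin> B'" using B'(1) uu V'_def by auto
    have orth: "u \<bullet> w = 0" if "w \<in> B'" for w using B'(1) that V'_def by auto
    show ?thesis
    proof (intro exI[of _ "insert u B'"] conjI)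
      show "insert u B' \<subseteq> V" using uV B'(1) V'_def by auto
      show "finite (insert u B')" using B'(2) by simp
      show "pairwise orthogonal (insert u B')"
        using B'(4) orth by (intro pairwise_orthogonal_insert) (auto simp: orthogonal_def)
      show "\<forall>v\<in>insert u B'. norm v = 1 \<and> A *v v = (v \<bullet> (A *v v)) *\<^sub>R v" using un ue B'(3) by auto
      show "\<forall>x\<in>V. x = (\<Sum>w\<in>insert u B'. (w \<bullet> x) *\<^sub>R w)"
      proof
      fix x assume xV: "x \<in> V"
      define x' where "x' = x - (u \<bullet> x) *\<^sub>R u"
      have x'V: "x' \<in> V'" unfolding x'_def V'_def using xV uV less.prems(1) uu
        by (auto simp: subspace_diff subspace_scale inner_diff_right)
      have "x' = (\<Sum>w\<in>B'. (w \<bullet> x') *\<^sub>R w)" using B'(5) x'V by blast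
      also have "\<dots> = (\<Sum>w\<in>B'. (w \<bullet> x) *\<^sub>R w)"
        by (intro sum.cong refl) (use orth in \<open>simp add: x'_def inner_diff_right inner_commute\<close>)
      finally have "x = (u \<bullet> x) *\<^sub>R u + (\<Sum>w\<in>B'. (w \<bullet> x) *\<^sub>R w)" unfolding x'_def by (simp add: algebra_simps)
      then show "x = (\<Sum>w\<in>insert u B'. (w \<bullet> x) *\<^sub>R w)" using B'(2) uB' by simp
      qed
    qed
  qed
qed

lemma spectral:
  fixes A :: "real^'n^'n"
  assumes sy: "symm A"
  obtains B where "finite B" "\<And>u. u \<in> B \<Longrightarrow> norm u = 1" "\<And>u. u \<in> B \<Longrightarrow> A *v u = (u \<bullet> (A *v u)) *\<^sub>R u"
     "pairwise orthogonal B" "\<And>x. x = (\<Sum>u\<in>B. (u \<bullet> x) *\<^sub>R u)"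
  using spectral_sub[OF sy, of UNIV] by auto

lemma mv_sum: "(A::real^'n^'m) *v (\<Sum>u\<in>B. f u) = (\<Sum>u\<in>B. A *v f u)"
  by (induction B rule: infinite_finite_induct) (auto simp: matrix_vector_right_distrib)

lemma orthonormal_coeff:
  fixes B :: "(real^'n) set"
  assumes "finite B" "pairwise orthogonal B" "\<And>u. u \<in> B \<Longrightarrow> norm u = 1" "w \<in> B"
  shows "w \<bullet> (\<Sum>u\<in>B. c u *\<^sub>R u) = c w"
proof -
  have "w \<bullet> (\<Sum>u\<in>B. c u *\<^sub>R u) = (\<Sum>u\<in>B. c u * (w \<bullet> u))" by (simp add: inner_sum_right)
  also have "\<dots> = c w * (w \<bullet> w) + (\<Sum>u\<in>B - {w}. c u * (w \<bullet> u))"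
    using assms by (simp add: sum.remove)
  also have "(\<Sum>u\<in>B - {w}. c u * (w \<bullet> u)) = 0"
    using assms(2,4) by (intro sum.neutral) (auto simp: pairwise_def orthogonal_def)
  also have "w \<bullet> w = 1" using assms(3)[OF assms(4)] by (simp add: dot_square_norm)
  finally show ?thesis by simp
qed

definition psd :: "real^'n^'n \<Rightarrow> bool" where
  "psd A \<longleftrightarrow> transpose A = A \<and> (\<forall>x. 0 \<le> x \<bullet> (A *v x))"

lemma sqrt_exists:
  fixes A :: "real^'n^'n"
  assumes "psd A"
  shows "\<exists>S. transpose S = S \<and> (\<forall>x. 0 \<le> x \<bullet> (S *v x)) \<and> S ** S = A"
proof -
  have sy: "symm A" using assms psd_def transpose_symm by blast
  obtain B where B: "finite B" "\<And>u. u \<in> B \<Longrightarrow> norm u = 1" "\<And>u. u \<in> B \<Longrightarrow> A *v u = (u \<bullet> (A *v u)) *\<^sub>R u"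
     "pairwise orthogonal B" "\<And>x. x = (\<Sum>u\<in>B. (u \<bullet> x) *\<^sub>R u)"
    using spectral[OF sy] by blast
  define l where "l u = u \<bullet> (A *v u)" for u
  have lpos: "l u \<ge> 0" for u using assms unfolding psd_def l_def by blast
  define S :: "real^'n^'n" where "S = (\<chi> i j. \<Sum>u\<in>B. sqrt (l u) * (u$i * u$j))"
  have Sapp: "S *v x = (\<Sum>u\<in>B. (sqrt (l u) * (u \<bullet> x)) *\<^sub>R u)" for x
  proof -
    have "(S *v x)$i = (\<Sum>u\<in>B. ((sqrt (l u) * (u \<bullet> x)) *\<^sub>R u)$i)" for i
    proof -
      have "(S *v x)$i = (\<Sum>j\<in>UNIV. (\<Sum>u\<in>B. sqrt (l u) * (u$i * u$j)) * x$j)"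
        by (simp add: S_def matrix_vector_mult_def)
      also have "\<dots> = (\<Sum>u\<in>B. \<Sum>j\<in>UNIV. sqrt (l u) * u$i * (u$j * x$j))"
        by (subst sum.swap) (simp add: sum_distrib_right mult.assoc)
      also have "\<dots> = (\<Sum>u\<in>B. sqrt (l u) * u$i * (u \<bullet> x))"
        by (simp add: inner_vec_def sum_distrib_left)
      finally show ?thesis by (simp add: mult.commute mult.left_commute)
    qed
    then show ?thesis by (simp add: vec_eq_iff)
  qed
  have Aapp: "A *v x = (\<Sum>u\<in>B. (l u * (u \<bullet> x)) *\<^sub>R u)" for x
  proof -
    have "A *v x = A *v (\<Sum>u\<in>B. (u \<bullet> x) *\<^sub>R u)" using B(5) by metis
    also have "\<dots> = (\<Sum>u\<in>B. (u \<bullet> x) *\<^sub>R (A *v u))" by (simp add: mv_sum matrix_vector_mult_scaleR)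
    also have "\<dots> = (\<Sum>u\<in>B. (l u * (u \<bullet> x)) *\<^sub>R u)"
      by (intro sum.cong refl) (metis B(3) l_def scaleR_scaleR mult.commute)
    finally show ?thesis .
  qed
  have "transpose S = S" by (simp add: S_def transpose_def vec_eq_iff mult.commute)
  moreover have "0 \<le> x \<bullet> (S *v x)" for x
  proof -
    have "x \<bullet> (S *v x) = (\<Sum>u\<in>B. sqrt (l u) * (u \<bullet> x) * (x \<bullet> u))" by (simp add: Sapp inner_sum_right)
    also have "\<dots> = (\<Sum>u\<in>B. sqrt (l u) * (u \<bullet> x)^2)" by (simp add: inner_commute power2_eq_square mult.assoc)
    also have "\<dots> \<ge> 0" using lpos by (intro sum_nonneg) simp
    finally show ?thesis .
  qed
  moreover have "S ** S = A"
  proof -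
    have "(S ** S) *v x = A *v x" for x
    proof -
      have "(S ** S) *v x = S *v (S *v x)" by (simp add: matrix_vector_mul_assoc)
      also have "\<dots> = (\<Sum>u\<in>B. (sqrt (l u) * (u \<bullet> (S *v x))) *\<^sub>R u)" by (rule Sapp)
      also have "\<dots> = (\<Sum>u\<in>B. (l u * (u \<bullet> x)) *\<^sub>R u)"
      proof (intro sum.cong refl)
        fix u assume u: "u \<in> B"
        have "u \<bullet> (S *v x) = sqrt (l u) * (u \<bullet> x)"
          unfolding Sapp by (rule orthonormal_coeff[OF B(1) B(4) B(2) u])
        then show "(sqrt (l u) * (u \<bullet> (S *v x))) *\<^sub>R u = (l u * (u \<bullet> x)) *\<^sub>R u"
          using lpos[of u] by (simp add: mult.assoc[symmetric])
      qed
      also have "\<dots> = A *v x" by (simp add: Aapp)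
      finally show ?thesis .
    qed
    then show ?thesis by (simp add: matrix_eq)
  qed
  ultimately show ?thesis by blast
qed

lemma sqrt_unique:
  fixes S1 S2 :: "real^'n^'n"
  assumes "psd S1" "psd S2" "S1 ** S1 = S2 ** S2"
  shows "S1 = S2"
proof -
  define D where "D = S1 - S2"
  have td: "transpose (S1 - S2) = transpose S1 - transpose S2" by (simp add: transpose_def vec_eq_iff)
  have tD: "transpose D = D" using assms(1,2) unfolding psd_def D_def td by simp
  have sy: "symm D" using tD transpose_symm by blast
  have s1: "symm S1" "symm S2" using assms(1,2) psd_def transpose_symm by blast+
  obtain B where B: "finite B" "\<And>u. u \<in> B \<Longrightarrow> norm u = 1" "\<And>u. u \<in> B \<Longrightarrow> D *v u = (u \<bullet> (D *v u)) *\<^sub>R u"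
     "pairwise orthogonal B" "\<And>x. x = (\<Sum>u\<in>B. (u \<bullet> x) *\<^sub>R u)"
    using spectral[OF sy] by blast
  have zero: "u \<bullet> (D *v u) = 0" if u: "u \<in> B" for u
  proof (rule ccontr)
    define m where "m = u \<bullet> (D *v u)"
    assume "u \<bullet> (D *v u) \<noteq> 0"
    hence mnz: "m \<noteq> 0" using m_def by simp
    have uu: "u \<bullet> u = 1" using B(2)[OF u] by (simp add: dot_square_norm)
    define a where "a = S1 *v u"
    define b where "b = S2 *v u"
    have "D *v u = m *\<^sub>R u" using B(3)[OF u] unfolding m_def by simp
    hence "a - b = m *\<^sub>R u" unfolding a_def b_def D_def by (simp add: matrix_vector_mult_diff_rdistrib)
    hence ab: "a = b + m *\<^sub>R u" by (metis diff_add_cancel add.commute)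
    have "a \<bullet> a = u \<bullet> (S1 *v (S1 *v u))" using s1(1) unfolding symm_def a_def by (metis inner_commute)
    also have "\<dots> = u \<bullet> (S2 *v (S2 *v u))" by (simp add: matrix_vector_mul_assoc assms(3))
    also have "\<dots> = b \<bullet> b" using s1(2) unfolding symm_def b_def by (metis inner_commute)
    finally have aa: "a \<bullet> a = b \<bullet> b" .
    have ua: "u \<bullet> a \<ge> 0" "u \<bullet> b \<ge> 0" using assms(1,2) unfolding psd_def a_def b_def by auto
    have e1: "a \<bullet> a = b \<bullet> b + 2 * m * (u \<bullet> b) + m^2"
      unfolding ab using uu by (simp add: inner_add_left inner_add_right inner_commute power2_eq_square algebra_simps)
    have e2: "u \<bullet> a = u \<bullet> b + m" unfolding ab using uu by (simp add: inner_add_right)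
    from aa e1 have "m * (2 * (u \<bullet> b) + m) = 0" by (simp add: power2_eq_square algebra_simps)
    hence "2 * (u \<bullet> b) + m = 0" using mnz by simp
    then show False using ua e2 mnz by linarith
  qed
  have "D *v x = 0 *v x" for x
  proof -
    have "D *v x = D *v (\<Sum>u\<in>B. (u \<bullet> x) *\<^sub>R u)" using B(5) by metis
    also have "\<dots> = (\<Sum>u\<in>B. (u \<bullet> x) *\<^sub>R (D *v u))" by (simp add: mv_sum matrix_vector_mult_scaleR)
    also have "\<dots> = 0" by (intro sum.neutral ballI) (metis B(3) zero scaleR_zero_left scaleR_zero_right)
    finally show ?thesis by simp
  qed
  hence "D = 0" using matrix_eq by blast
  then show ?thesis unfolding D_def by simp
qed

lemma psd_sqrt_props:
  fixes A :: "real^'n^'n"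
  assumes "psd A"
  shows "transpose (psd_sqrt A) = psd_sqrt A" "\<forall>x. 0 \<le> x \<bullet> (psd_sqrt A *v x)" "psd_sqrt A ** psd_sqrt A = A"
proof -
  have "\<exists>!S. transpose S = S \<and> (\<forall>x. 0 \<le> x \<bullet> (S *v x)) \<and> S ** S = A"
    using sqrt_exists[OF assms] sqrt_unique unfolding psd_def by metis
  from theI'[OF this] show "transpose (psd_sqrt A) = psd_sqrt A" "\<forall>x. 0 \<le> x \<bullet> (psd_sqrt A *v x)" "psd_sqrt A ** psd_sqrt A = A"
    unfolding psd_sqrt_def by auto
qed

lemma mv_linear: "bounded_linear (\<lambda>M::real^'n^'m. M *v v)"
proof -
  have "linear (\<lambda>M::real^'n^'m. M *v v)"
    by (rule linearI) (simp_all add: matrix_vector_mult_add_rdistrib scaleR_matrix_vector_assoc)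
  then show ?thesis by (simp add: linear_conv_bounded_linear)
qed

lemma onorm_mpow:
  fixes A :: "real^'n^'n"
  shows "onorm ((*v) (mpow A n)) \<le> onorm ((*v) A) ^ n"
proof (induction n)
  case 0
  have "onorm (\<lambda>x::real^'n. x) \<le> 1" by (rule onorm_le) simp
  then show ?case by simp
next
  case (Suc n)
  have eq: "(*v) (mpow A (Suc n)) = (*v) A \<circ> (*v) (mpow A n)"
    by (rule ext) (simp add: matrix_vector_mul_assoc)
  have "onorm ((*v) (mpow A (Suc n))) \<le> onorm ((*v) A) * onorm ((*v) (mpow A n))"
    unfolding eq by (intro onorm_compose matrix_vector_mul_bounded_linear)
  also have "\<dots> \<le> onorm ((*v) A) * onorm ((*v) A) ^ n"
    by (intro mult_left_mono Suc.IH onorm_pos_le matrix_vector_mul_bounded_linear)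
  finally show ?case by simp
qed

lemma norm_matrix_le_onorm:
  fixes M :: "real^'n^'m"
  shows "norm M \<le> real CARD('m) * real CARD('n) * onorm ((*v) M)"
proof -
  have "norm M \<le> (\<Sum>i\<in>UNIV. norm (M$i))"
    unfolding norm_vec_def by (rule L2_set_le_sum) simp
  also have "\<dots> \<le> (\<Sum>i\<in>(UNIV::'m set). \<Sum>j\<in>(UNIV::'n set). onorm ((*v) M))"
  proof (intro sum_mono)
    fix i
    have "norm (M$i) \<le> (\<Sum>j\<in>UNIV. \<bar>M$i$j\<bar>)" by (rule norm_le_l1_cart)
    also have "\<dots> \<le> (\<Sum>j\<in>(UNIV::'n set). onorm ((*v) M))"
      by (intro sum_mono matrix_component_le_onorm)
    finally show "norm (M$i) \<le> (\<Sum>j\<in>(UNIV::'n set). onorm ((*v) M))" .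
  qed
  finally show ?thesis by simp
qed

lemma mexp_summable:
  fixes A :: "real^'n^'n"
  shows "summable (\<lambda>k. (t ^ k / fact k) *\<^sub>R mpow A k)"
proof -
  define K where "K = onorm ((*v) A)"
  define C where "C = real CARD('n) * real CARD('n)"
  have K0: "K \<ge> 0" unfolding K_def by (intro onorm_pos_le matrix_vector_mul_bounded_linear)
  have "summable (\<lambda>k. C * (inverse (fact k) * (\<bar>t\<bar> * K) ^ k))"
    by (intro summable_mult summable_exp)
  moreover have "norm ((t ^ k / fact k) *\<^sub>R mpow A k) \<le> C * (inverse (fact k) * (\<bar>t\<bar> * K) ^ k)" for k
  proof -
    have "norm (mpow A k) \<le> C * K ^ k"
    proof -
      have C0: "C \<ge> 0" unfolding C_def by simp
      have "norm (mpow A k) \<le> C * onorm ((*v) (mpow A k))"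
        using norm_matrix_le_onorm[of "mpow A k"] unfolding C_def by simp
      also have "\<dots> \<le> C * K ^ k" unfolding K_def by (intro mult_left_mono onorm_mpow C0)
      finally show ?thesis .
    qed
    then have "norm ((t ^ k / fact k) *\<^sub>R mpow A k) \<le> (\<bar>t\<bar> ^ k / fact k) * (C * K ^ k)"
      by (simp add: power_abs mult_left_mono divide_right_mono)
    also have "\<dots> = C * (inverse (fact k) * (\<bar>t\<bar> * K) ^ k)"
      by (simp add: power_mult_distrib field_simps)
    finally show ?thesis .
  qed
  ultimately show ?thesis by (rule summable_comparison_test'[where N=0]) 
qed

lemma mexp_apply:
  fixes A :: "real^'n^'n"
  shows "mexp t A *v v = (\<Sum>k. (t ^ k / fact k) *\<^sub>R (mpow A k *v v))"
proof -
  have s: "summable (\<lambda>k. (t ^ k / fact k) *\<^sub>R mpow A k)" by (rule mexp_summable)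
  show ?thesis unfolding mexp_def
    using bounded_linear.suminf[OF mv_linear[of v] s]
    by (simp add: scaleR_matrix_vector_assoc)
qed

lemma vec_series_summable:
  fixes A :: "real^'n^'n"
  shows "summable (\<lambda>k. (t ^ k / fact k) *\<^sub>R (mpow A k *v v))"
proof -
  have s: "summable (\<lambda>k. (t ^ k / fact k) *\<^sub>R mpow A k)" by (rule mexp_summable)
  show ?thesis
    using bounded_linear.summable[OF mv_linear[of v] s]
    by (simp add: scaleR_matrix_vector_assoc)
qed

lemma mexp_deriv:
  fixes A :: "real^'n^'n"
  shows "((\<lambda>t. mexp t A *v v) has_vector_derivative (A *v (mexp t A *v v))) (at t)"
proof -
  define y where "y t = (\<Sum>k. (t ^ k / fact k) *\<^sub>R (mpow A k *v v))" for t
  have fy: "(\<lambda>t. mexp t A *v v) = y" by (rule ext) (simp add: mexp_apply y_def)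
  have comp: "((\<lambda>t. y t $ i) has_field_derivative (A *v y t) $ i) (at t)" for i
  proof -
    define c where "c k = (mpow A k *v v) $ i / fact k" for k
    have ser: "(\<lambda>k. ((s ^ k / fact k) *\<^sub>R (mpow A k *v v)) $ i) = (\<lambda>k. c k * s ^ k)" for s
      by (rule ext) (simp add: c_def)
    have yc: "y s $ i = (\<Sum>k. c k * s ^ k)" for s
      unfolding y_def using bounded_linear.suminf[OF bounded_linear_vec_nth[of i] vec_series_summable[of s A v]]
      by (simp only: ser)
    have sc: "summable (\<lambda>k. c k * s ^ k)" for s
      using bounded_linear.summable[OF bounded_linear_vec_nth[of i] vec_series_summable[of s A v]]
      by (simp only: ser)
    have yfun: "(\<lambda>s. y s $ i) = (\<lambda>s. \<Sum>k. c k * s ^ k)" by (rule ext) (simp add: yc)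
    have d: "((\<lambda>s. y s $ i) has_field_derivative (\<Sum>k. diffs c k * t ^ k)) (at t)"
      unfolding yfun by (rule termdiffs_strong_converges_everywhere[OF sc])
    have sA: "summable (\<lambda>k. (t ^ k / fact k) *\<^sub>R (A *v (mpow A k *v v)))"
      using bounded_linear.summable[OF matrix_vector_mul_bounded_linear[of A] vec_series_summable[of t A v]]
      by (simp add: matrix_vector_mult_scaleR)
    have Ay: "A *v y t = (\<Sum>k. (t ^ k / fact k) *\<^sub>R (A *v (mpow A k *v v)))"
      unfolding y_def using bounded_linear.suminf[OF matrix_vector_mul_bounded_linear[of A] vec_series_summable[of t A v]]
      by (simp add: matrix_vector_mult_scaleR)
    have "(A *v y t) $ i = (\<Sum>k. ((t ^ k / fact k) *\<^sub>R (A *v (mpow A k *v v))) $ i)"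
      unfolding Ay using bounded_linear.suminf[OF bounded_linear_vec_nth[of i] sA] .
    also have "\<dots> = (\<Sum>k. diffs c k * t ^ k)"
    proof (rule arg_cong[where f=suminf], rule ext)
      fix k
      have "diffs c k = (mpow A (Suc k) *v v) $ i / fact k"
      proof -
        have g: "of_nat (Suc k) * (x / fact (Suc k)) = x / (fact k :: real)" for x
        proof -
          have "fact (Suc k) = (of_nat (Suc k)) * (fact k :: real)" by (simp add: fact_Suc)
          then show ?thesis by (simp del: of_nat_Suc fact_Suc)
        qed
        show ?thesis unfolding diffs_def c_def by (rule g)
      qed
      also have "mpow A (Suc k) *v v = A *v (mpow A k *v v)" by (simp add: matrix_vector_mul_assoc)
      finally show "((t ^ k / fact k) *\<^sub>R (A *v (mpow A k *v v))) $ i = diffs c k * t ^ k" by simp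
    qed
    finally show ?thesis using d by simp
  qed
  have "(y has_derivative (\<lambda>h. h *\<^sub>R (A *v y t))) (at t)"
  proof (subst has_derivative_componentwise_within, intro ballI)
    fix b :: "real^'n" assume "b \<in> Basis"
    then obtain j where b: "b = axis j 1" by (auto simp: Basis_vec_def)
    have "((\<lambda>s. y s $ j) has_derivative (\<lambda>h. (A *v y t) $ j * h)) (at t)"
      using comp[of j] by (simp add: has_field_derivative_def)
    then show "((\<lambda>x. y x \<bullet> b) has_derivative (\<lambda>x. x *\<^sub>R (A *v y t) \<bullet> b)) (at t)"
      unfolding b by (simp add: inner_axis mult.commute)
  qed
  moreover have "mexp t A *v v = y t" using fy by metis
  ultimately show ?thesis unfolding fy has_vector_derivative_def by simp
qed

lemma mexp_zero_apply: "mexp 0 (A::real^'n^'n) *v v = v"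
proof -
  have "(\<lambda>k. ((0::real) ^ k / fact k) *\<^sub>R (mpow A k *v v)) = (\<lambda>k. if k = 0 then v else 0)"
    by (rule ext) simp
  moreover have "(\<lambda>k. if k = 0 then v else 0) sums v"
    using sums_single[of 0 "\<lambda>_. v"] by simp
  ultimately show ?thesis by (simp add: mexp_apply sums_iff)
qed

lemma mexp_cont: "continuous_on S (\<lambda>t. mexp t (A::real^'n^'n) *v v)"
proof (rule continuous_at_imp_continuous_on, intro ballI)
  fix t
  show "isCont (\<lambda>t. mexp t A *v v) t"
    using has_vector_derivative_continuous[OF mexp_deriv[where t=t and A=A and v=v]] .
qed

lemma lyap_interval:
  fixes A :: "real^'s^'s" and C :: "real^'s^'o" and f :: "real^'s \<Rightarrow> real^'s"
  assumes lin: "linear f" and sym: "\<And>u w. u \<bullet> f w = w \<bullet> f u" and pos: "\<And>z. 0 \<le> z \<bullet> f z"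
    and lyap: "\<And>z. 2 * ((A *v z) \<bullet> f z) + (norm (C *v z))^2 \<le> 0"
    and T: "0 \<le> T"
  shows "(\<lambda>t. (norm (C *v (mexp t A *v v)))^2) integrable_on {0..T}"
    "integral {0..T} (\<lambda>t. (norm (C *v (mexp t A *v v)))^2) \<le> v \<bullet> f v"
proof -
  define x where "x t = mexp t A *v v" for t
  define phi where "phi t = x t \<bullet> f (x t)" for t
  have bl: "bounded_linear f" using lin by (simp add: linear_conv_bounded_linear)
  have dx: "(x has_derivative (\<lambda>h. h *\<^sub>R (A *v x t))) (at t)" for t
    using mexp_deriv[where t=t and A=A and v=v] unfolding x_def has_vector_derivative_def by simp
  have dphi: "(phi has_vector_derivative (2 * ((A *v x t) \<bullet> f (x t)))) (at t)" for t
  proof -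
    have dfx: "((\<lambda>s. f (x s)) has_derivative (\<lambda>h. f (h *\<^sub>R (A *v x t)))) (at t)"
      by (rule bounded_linear.has_derivative[OF bl dx])
    have "(phi has_derivative (\<lambda>h. x t \<bullet> f (h *\<^sub>R (A *v x t)) + (h *\<^sub>R (A *v x t)) \<bullet> f (x t))) (at t)"
      unfolding phi_def by (rule has_derivative_inner[OF dx dfx])
    moreover have "(\<lambda>h. x t \<bullet> f (h *\<^sub>R (A *v x t)) + (h *\<^sub>R (A *v x t)) \<bullet> f (x t)) = (\<lambda>h. h *\<^sub>R (2 * ((A *v x t) \<bullet> f (x t))))"
    proof (rule ext)
      fix h
      have "x t \<bullet> f (h *\<^sub>R (A *v x t)) = h * ((A *v x t) \<bullet> f (x t))"
        using sym[of "x t" "h *\<^sub>R (A *v x t)"] by simp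
      then show "x t \<bullet> f (h *\<^sub>R (A *v x t)) + (h *\<^sub>R (A *v x t)) \<bullet> f (x t) = h *\<^sub>R (2 * ((A *v x t) \<bullet> f (x t)))"
        by simp
    qed
    ultimately show ?thesis unfolding has_vector_derivative_def by simp
  qed
  have ftc: "((\<lambda>t. 2 * ((A *v x t) \<bullet> f (x t))) has_integral (phi T - phi 0)) {0..T}"
    by (rule fundamental_theorem_of_calculus[OF T]) (use dphi has_vector_derivative_at_within in blast)
  have cg: "continuous_on {0..T} (\<lambda>t. (norm (C *v x t))^2)"
    unfolding x_def by (intro continuous_intros continuous_on_compose2[OF _ mexp_cont] linear_continuous_on matrix_vector_mul_bounded_linear) auto
  show ig: "(\<lambda>t. (norm (C *v (mexp t A *v v)))^2) integrable_on {0..T}"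
    using integrable_continuous_interval[OF cg] unfolding x_def .
  have "integral {0..T} (\<lambda>t. (norm (C *v x t))^2) \<le> integral {0..T} (\<lambda>t. - (2 * ((A *v x t) \<bullet> f (x t))))"
  proof (rule integral_le)
    show "(\<lambda>t. (norm (C *v x t))^2) integrable_on {0..T}" using ig unfolding x_def .
    show "(\<lambda>t. - (2 * ((A *v x t) \<bullet> f (x t)))) integrable_on {0..T}"
      using has_integral_neg[OF ftc] by (auto intro: has_integral_integrable)
    fix t show "(norm (C *v x t))^2 \<le> - (2 * ((A *v x t) \<bullet> f (x t)))"
      using lyap[of "x t"] by simp
  qed
  also have "\<dots> = phi 0 - phi T"
    using integral_unique[OF has_integral_neg[OF ftc]] by simp
  also have "\<dots> \<le> phi 0" using pos unfolding phi_def by simp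
  also have "phi 0 = v \<bullet> f v" unfolding phi_def x_def by (simp add: mexp_zero_apply)
  finally show "integral {0..T} (\<lambda>t. (norm (C *v (mexp t A *v v)))^2) \<le> v \<bullet> f v" unfolding x_def .
qed

lemma normsq_cols:
  fixes M :: "real^'i^'o"
  shows "(norm M)^2 = (\<Sum>c\<in>UNIV. (norm (M *v axis c 1))^2)"
proof -
  have nv: "(norm (x::real^'k))^2 = (\<Sum>i\<in>UNIV. (x$i)^2)" for x
    unfolding power2_norm_eq_inner by (simp add: inner_vec_def power2_eq_square)
  have "(norm M)^2 = M \<bullet> M" by (rule power2_norm_eq_inner)
  also have "\<dots> = (\<Sum>r\<in>UNIV. M$r \<bullet> M$r)" by (simp add: inner_vec_def)
  also have "\<dots> = (\<Sum>r\<in>UNIV. \<Sum>c\<in>UNIV. (M$r$c)^2)"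
    by (simp add: inner_vec_def power2_eq_square)
  also have "\<dots> = (\<Sum>c\<in>UNIV. \<Sum>r\<in>UNIV. (M$r$c)^2)" by (rule sum.swap)
  also have "\<dots> = (\<Sum>c\<in>UNIV. (norm (M *v axis c 1))^2)"
    by (simp add: nv matrix_vector_mult_basis column_def)
  finally show ?thesis .
qed

lemma h2_bound:
  fixes A :: "real^'s^'s" and B :: "real^'i^'s" and C :: "real^'s^'o" and f :: "real^'s \<Rightarrow> real^'s"
  assumes lin: "linear f" and sym: "\<And>u w. u \<bullet> f w = w \<bullet> f u" and pos: "\<And>z. 0 \<le> z \<bullet> f z"
    and lyap: "\<And>z. 2 * ((A *v z) \<bullet> f z) + (norm (C *v z))^2 \<le> 0"
  shows "h2norm_sq A B C \<le> ennreal (\<Sum>c\<in>UNIV. (B *v axis c 1) \<bullet> f (B *v axis c 1))"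
proof -
  define bnd where "bnd = (\<Sum>c\<in>UNIV. (B *v axis c 1) \<bullet> f (B *v axis c 1))"
  define g where "g t = (norm (C ** mexp t A ** B))^2" for t
  have gs: "g t = (\<Sum>c\<in>UNIV. (norm (C *v (mexp t A *v (B *v axis c 1))))^2)" for t
    unfolding g_def normsq_cols by (simp add: matrix_vector_mul_assoc matrix_mul_assoc)
  have gcont: "continuous_on S g" for S
    unfolding gs[abs_def]
    by (intro continuous_intros continuous_on_compose2[OF _ mexp_cont] linear_continuous_on matrix_vector_mul_bounded_linear) auto
  have gm[measurable]: "g \<in> borel_measurable lborel"
    using borel_measurable_continuous_onI[OF gcont] by simp
  have g0: "0 \<le> g t" for t unfolding g_def by simp
  have int_le: "(\<integral>\<^sup>+ t. indicator {0..real n} t * ennreal (g t) \<partial>lborel) \<le> ennreal bnd" for n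
  proof -
    have ii: "(\<lambda>t. (norm (C *v (mexp t A *v (B *v axis c 1))))^2) integrable_on {0..real n}" for c
      by (rule lyap_interval(1)[OF lin sym pos lyap]) simp
    have il: "integral {0..real n} (\<lambda>t. (norm (C *v (mexp t A *v (B *v axis c 1))))^2) \<le> (B *v axis c 1) \<bullet> f (B *v axis c 1)" for c
      by (rule lyap_interval(2)[OF lin sym pos lyap]) simp
    have hi: "(g has_integral (\<Sum>c\<in>UNIV. integral {0..real n} (\<lambda>t. (norm (C *v (mexp t A *v (B *v axis c 1))))^2))) {0..real n}"
      unfolding gs[abs_def] by (intro has_integral_sum finite_UNIV) (use ii in auto)
    have "(\<integral>\<^sup>+ t. indicator {0..real n} t * ennreal (g t) \<partial>lborel)
        = ennreal (\<Sum>c\<in>UNIV. integral {0..real n} (\<lambda>t. (norm (C *v (mexp t A *v (B *v axis c 1))))^2))"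
      using nn_integral_has_integral_lebesgue[OF _ hi] g0 by (simp add: indicator_mult_ennreal)
    also have "\<dots> \<le> ennreal bnd" unfolding bnd_def by (intro ennreal_leI sum_mono il)
    finally show ?thesis .
  qed
  have sup: "indicator {0..} t * ennreal (g t) = (SUP n. indicator {0..real n} t * ennreal (g t))" for t
  proof (cases "t \<ge> 0")
    case True
    obtain m where m: "t \<le> real m" using real_arch_simple by blast
    have "indicator {0..} t * ennreal (g t) \<le> (SUP n. indicator {0..real n} t * ennreal (g t))"
      using True m by (intro SUP_upper2[of m]) auto
    moreover have "(SUP n. indicator {0..real n} t * ennreal (g t)) \<le> indicator {0..} t * ennreal (g t)"
      using True by (intro SUP_least) (auto simp: indicator_def)
    ultimately show ?thesis by (rule antisym)
  next
    case False
    then show ?thesis by (simp add: indicator_def)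
  qed
  have inc: "incseq (\<lambda>n t. indicator {0..real n} t * ennreal (g t))"
    by (auto simp: incseq_def le_fun_def indicator_def)
  have "h2norm_sq A B C = (\<integral>\<^sup>+ t. (SUP n. indicator {0..real n} t * ennreal (g t)) \<partial>lborel)"
    unfolding h2norm_sq_def g_def[symmetric] sup ..
  also have "\<dots> = (SUP n. \<integral>\<^sup>+ t. indicator {0..real n} t * ennreal (g t) \<partial>lborel)"
    by (rule nn_integral_monotone_convergence_SUP[OF inc]) measurable
  also have "\<dots> \<le> ennreal bnd" by (intro SUP_least int_le)
  finally show ?thesis unfolding bnd_def .
qed

lemma sum_UNIV_Plus: "(\<Sum>x\<in>(UNIV::('a::finite + 'b::finite) set). g x) = (\<Sum>a\<in>UNIV. g (Inl a)) + (\<Sum>b\<in>UNIV. g (Inr b))"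
  using sum.Plus[of "UNIV::'a set" "UNIV::'b set" g] by (simp add: o_def)

lemma sum_UNIV3: "(\<Sum>x\<in>(UNIV::('a::finite + 'a + 'a) set). g x) =
   (\<Sum>i\<in>UNIV. g (Inl i)) + (\<Sum>i\<in>UNIV. g (Inr (Inl i))) + (\<Sum>i\<in>UNIV. g (Inr (Inr i)))"
  by (simp add: sum_UNIV_Plus add.assoc)

lemma sum_delta_mult[simp]: "(\<Sum>j\<in>UNIV. (if i = j then a else 0) * g j) = (a::real) * g (i::'a::finite)"
proof -
  have "(\<Sum>j\<in>UNIV. (if i = j then a else 0) * g j) = (\<Sum>j\<in>UNIV. (if i = j then a * g j else 0))"
    by (intro sum.cong) auto
  then show ?thesis by simp
qed

definition dl :: "real^('n::finite+'n+'n) \<Rightarrow> real^'n" where "dl z = (\<chi> i. z $ Inl i)"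
definition om :: "real^('n::finite+'n+'n) \<Rightarrow> real^'n" where "om z = (\<chi> i. z $ Inr (Inl i))"
definition vv :: "real^('n::finite+'n+'n) \<Rightarrow> real^'n" where "vv z = (\<chi> i. z $ Inr (Inr i))"
definition mk :: "real^'n \<Rightarrow> real^'n \<Rightarrow> real^'n \<Rightarrow> real^('n::finite+'n+'n)" where
  "mk d e v = (\<chi> r. case r of Inl i \<Rightarrow> d$i | Inr (Inl i) \<Rightarrow> e$i | Inr (Inr i) \<Rightarrow> v$i)"

lemma blocks_mk[simp]: "dl (mk d e v) = d" "om (mk d e v) = e" "vv (mk d e v) = v"
  by (simp_all add: dl_def om_def vv_def mk_def vec_eq_iff)

lemma blocks_add[simp]: "dl (z + w) = dl z + dl w" "om (z + w) = om z + om w" "vv (z + w) = vv z + vv w"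
  by (simp_all add: dl_def om_def vv_def vec_eq_iff)

lemma blocks_scale[simp]: "dl (c *\<^sub>R z) = c *\<^sub>R dl z" "om (c *\<^sub>R z) = c *\<^sub>R om z" "vv (c *\<^sub>R z) = c *\<^sub>R vv z"
  by (simp_all add: dl_def om_def vv_def vec_eq_iff)

lemma mk_add: "mk d e v + mk d' e' v' = mk (d + d') (e + e') (v + v')"
  by (simp add: mk_def vec_eq_iff split: sum.splits)

lemma mk_scale: "c *\<^sub>R mk d e v = mk (c *\<^sub>R d) (c *\<^sub>R e) (c *\<^sub>R v)"
  by (simp add: mk_def vec_eq_iff split: sum.splits)

lemma inner_blocks: "z \<bullet> w = dl z \<bullet> dl w + om z \<bullet> om w + vv z \<bullet> vv w"
  by (simp add: inner_vec_def sum_UNIV3 dl_def om_def vv_def)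

lemma sysA_blocks:
  fixes L :: "real^'n::finite^'n"
  shows "dl (sysA kP tauP kQ tauQ cQ L *v z) = om z"
    "om (sysA kP tauP kQ tauQ cQ L *v z) = - (kP / tauP) *\<^sub>R (L *v dl z) - (1 / tauP) *\<^sub>R om z"
    "vv (sysA kP tauP kQ tauQ cQ L *v z) = - (cQ / tauQ) *\<^sub>R vv z - (kQ / tauQ) *\<^sub>R (L *v vv z)"
proof -
  show "dl (sysA kP tauP kQ tauQ cQ L *v z) = om z"
    by (simp add: vec_eq_iff dl_def om_def sysA_def matrix_vector_mult_def sum_UNIV3)
  show "om (sysA kP tauP kQ tauQ cQ L *v z) = - (kP / tauP) *\<^sub>R (L *v dl z) - (1 / tauP) *\<^sub>R om z"
    by (simp add: vec_eq_iff dl_def om_def sysA_def matrix_vector_mult_def sum_UNIV3 sum_negf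
       sum_distrib_left mult.assoc)
  show "vv (sysA kP tauP kQ tauQ cQ L *v z) = - (cQ / tauQ) *\<^sub>R vv z - (kQ / tauQ) *\<^sub>R (L *v vv z)"
    by (simp add: vec_eq_iff vv_def sysA_def matrix_vector_mult_def sum_UNIV3 sum_negf
       left_diff_distrib sum_subtractf sum_distrib_left mult.assoc)
qed

lemma sysC_normsq:
  fixes S :: "real^'n::finite^'n"
  assumes "alpha \<ge> 0"
  shows "(norm (sysC alpha S *v z))^2 = alpha * ((norm (S *v dl z))^2 + (norm (S *v vv z))^2)"
proof -
  have nv: "(norm (x::real^'k))^2 = (\<Sum>i\<in>UNIV. (x$i)^2)" for x
    unfolding power2_norm_eq_inner by (simp add: inner_vec_def power2_eq_square)
  have c1: "(sysC alpha S *v z) $ Inl i = sqrt alpha * (S *v dl z) $ i" for i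
    by (simp add: sysC_def matrix_vector_mult_def sum_UNIV3 dl_def sum_distrib_left mult.assoc)
  have c2: "(sysC alpha S *v z) $ Inr i = sqrt alpha * (S *v vv z) $ i" for i
    by (simp add: sysC_def matrix_vector_mult_def sum_UNIV3 vv_def sum_distrib_left mult.assoc)
  show ?thesis
    using assms by (simp add: nv sum_UNIV_Plus c1 c2 power_mult_distrib sum_distrib_left distrib_left)
qed

lemma sysB_cols:
  fixes tauP tauQ :: real
  shows "(sysB tauP tauQ :: real^('n::finite+'n)^('n+'n+'n)) *v axis (Inl j) 1 = mk 0 ((1 / tauP) *\<^sub>R axis j 1) 0"
    "(sysB tauP tauQ :: real^('n::finite+'n)^('n+'n+'n)) *v axis (Inr j) 1 = mk 0 0 ((1 / tauQ) *\<^sub>R axis j 1)"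
  by (simp_all only: matrix_vector_mult_basis) (simp_all add: column_def sysB_def mk_def vec_eq_iff axis_def split: sum.splits)

definition onev :: "real^'n::finite" where "onev = (\<chi> i. 1)"
definition sv :: "real^'n::finite \<Rightarrow> real" where "sv v = (\<Sum>j\<in>UNIV. v$j)"
definition Pm :: "real^'n::finite \<Rightarrow> real^'n" where "Pm v = v - (sv v / real CARD('n)) *\<^sub>R onev"

context
  fixes b :: "'n::finite \<Rightarrow> 'n \<Rightarrow> real"
  assumes bsym: "\<And>x y. b x y = b y x" and bdiag: "\<And>x. b x x = 0" and bnn: "\<And>x y. 0 \<le> b x y"
begin

lemma lap_entry: "laplacian b $ i $ k = (if i = k then (\<Sum>j\<in>UNIV. b i j) else 0) - b i k"
proof -
  have r: "(\<Sum>j\<in>UNIV - {i'}. b i' j) = (\<Sum>j\<in>UNIV. b i' j)" for i'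
    using sum.remove[of UNIV i' "b i'"] bdiag by simp
  show ?thesis by (simp add: laplacian_def bdiag r)
qed

lemma lap_transpose: "transpose (laplacian b) = laplacian b"
  by (simp add: vec_eq_iff transpose_def lap_entry bsym)

lemma lap_sym: "u \<bullet> (laplacian b *v w) = (laplacian b *v u) \<bullet> w"
  by (metis dot_lmul_matrix inner_commute lap_transpose transpose_matrix_vector)

lemma lap_apply: "(laplacian b *v x) $ i = (\<Sum>j\<in>UNIV. b i j * (x$i - x$j))"
proof -
  have "(laplacian b *v x) $ i = (\<Sum>j\<in>UNIV. (if i = j then (\<Sum>j\<in>UNIV. b i j) else 0) * x$j - b i j * x$j)"
    by (simp add: matrix_vector_mult_def lap_entry left_diff_distrib)
  also have "\<dots> = (\<Sum>j\<in>UNIV. b i j) * x$i - (\<Sum>j\<in>UNIV. b i j * x$j)"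
    by (simp only: sum_subtractf sum_delta_mult)
  also have "\<dots> = (\<Sum>j\<in>UNIV. b i j * (x$i - x$j))"
    by (simp add: right_diff_distrib sum_subtractf sum_distrib_right)
  finally show ?thesis .
qed

lemma lap_quad: "x \<bullet> (laplacian b *v x) = (\<Sum>i\<in>UNIV. \<Sum>j\<in>UNIV. b i j * x$i * (x$i - x$j))"
  by (simp add: inner_vec_def lap_apply sum_distrib_left mult.commute mult.left_commute)

lemma lap_nonneg: "0 \<le> x \<bullet> (laplacian b *v x)"
proof -
  define S where "S = (\<Sum>i\<in>UNIV. \<Sum>j\<in>UNIV. b i j * x$i * (x$i - x$j))"
  have "S = (\<Sum>j\<in>UNIV. \<Sum>i\<in>UNIV. b i j * x$i * (x$i - x$j))" unfolding S_def by (rule sum.swap)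
  also have "\<dots> = (\<Sum>i\<in>UNIV. \<Sum>j\<in>UNIV. b i j * x$j * (x$j - x$i))" by (simp add: bsym)
  finally have "2 * S = (\<Sum>i\<in>UNIV. \<Sum>j\<in>UNIV. b i j * x$i * (x$i - x$j)) + (\<Sum>i\<in>UNIV. \<Sum>j\<in>UNIV. b i j * x$j * (x$j - x$i))"
    unfolding S_def by simp
  also have "\<dots> = (\<Sum>i\<in>UNIV. \<Sum>j\<in>UNIV. b i j * (x$i - x$j)^2)"
    by (simp add: sum.distrib[symmetric] power2_eq_square algebra_simps)
  also have "\<dots> \<ge> 0" using bnn by (intro sum_nonneg) simp
  finally show ?thesis using lap_quad S_def by simp
qed

lemma lap_onev: "laplacian b *v onev = 0"
  by (simp add: vec_eq_iff lap_apply onev_def)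

lemma sv_lap: "sv (laplacian b *v v) = 0"
proof -
  have "sv (laplacian b *v v) = onev \<bullet> (laplacian b *v v)" by (simp add: sv_def inner_vec_def onev_def)
  also have "\<dots> = (laplacian b *v onev) \<bullet> v" by (rule lap_sym)
  finally show ?thesis by (simp add: lap_onev)
qed

lemma lap_Pm: "laplacian b *v Pm v = laplacian b *v v"
  by (simp add: Pm_def matrix_vector_mult_diff_distrib matrix_vector_mult_scaleR lap_onev)

lemma Pm_lap: "Pm (laplacian b *v v) = laplacian b *v v"
  by (simp add: Pm_def sv_lap)

lemma lap_trace: "(\<Sum>j\<in>UNIV. axis j 1 \<bullet> (laplacian b *v axis j 1)) = (\<Sum>i\<in>UNIV. \<Sum>j\<in>UNIV. b i j)"
  by (simp add: inner_axis' matrix_vector_mult_basis column_def lap_entry bdiag)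

end

lemma inner_onev: fixes u :: "real^'n::finite" shows "u \<bullet> onev = sv u"
  by (simp add: sv_def inner_vec_def onev_def)

lemma sv_onev: "sv (onev :: real^'n::finite) = real CARD('n)"
  by (simp add: sv_def onev_def)

lemma inner_Pm: fixes u w :: "real^'n::finite" shows "u \<bullet> Pm w = u \<bullet> w - sv u * sv w / real CARD('n)"
  by (simp add: Pm_def inner_diff_right inner_onev)

lemma Pm_sym: fixes u w :: "real^'n::finite" shows "u \<bullet> Pm w = Pm u \<bullet> w"
proof -
  have "Pm u \<bullet> w = w \<bullet> Pm u" by (rule inner_commute)
  then show ?thesis by (simp add: inner_Pm inner_commute mult.commute)
qed

lemma sv_Pm: "sv (Pm (u::real^'n::finite)) = 0"
proof -
  have "sv (Pm u) = Pm u \<bullet> onev" by (simp add: inner_onev)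
  also have "\<dots> = u \<bullet> Pm onev" by (simp add: Pm_sym)
  also have "\<dots> = 0" by (simp add: inner_Pm inner_onev sv_onev Pm_def)
  finally show ?thesis .
qed

lemma Pm_idem: fixes u w :: "real^'n::finite" shows "Pm u \<bullet> Pm w = u \<bullet> Pm w"
proof -
  have "Pm u \<bullet> Pm w = Pm u \<bullet> w - sv (Pm u) * sv w / real CARD('n)" by (rule inner_Pm)
  also have "\<dots> = Pm u \<bullet> w" by (simp add: sv_Pm)
  finally show ?thesis by (simp add: Pm_sym)
qed

lemma Pm_axis: "axis j 1 \<bullet> Pm (axis j 1 :: real^'n::finite) = 1 - 1 / real CARD('n)"
proof -
  have "sv (axis j 1 :: real^'n) = 1" by (simp add: sv_def axis_def)
  moreover have "axis j 1 \<bullet> (axis j 1 :: real^'n) = 1" by (simp add: inner_axis_axis)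
  ultimately show ?thesis by (simp add: inner_Pm)
qed

lemma Pm_linear: fixes u w :: "real^'n::finite" shows "Pm (u + w) = Pm u + Pm w" "Pm (c *\<^sub>R u) = c *\<^sub>R Pm u"
  by (simp_all add: Pm_def sv_def sum.distrib algebra_simps sum_distrib_left add_divide_distrib scaleR_add_left)

context
  fixes b :: "'n::finite \<Rightarrow> 'n \<Rightarrow> real" and p :: "nat \<Rightarrow> 'n"
  assumes N2: "CARD('n) \<ge> 2"
    and p_bij: "bij_betw p {1..CARD('n)} UNIV"
    and b_sym: "\<And>x y. b x y = b y x"
    and b_edge: "\<And>i. 1 \<le> i \<Longrightarrow> i < CARD('n) \<Longrightarrow> b (p i) (p (i + 1)) > 0"
    and b_nonedge: "\<And>i k. i \<in> {1..CARD('n)} \<Longrightarrow> k \<in> {1..CARD('n)} \<Longrightarrow>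
                       k \<noteq> i + 1 \<Longrightarrow> i \<noteq> k + 1 \<Longrightarrow> b (p i) (p k) = 0"
begin

lemma p_surj: obtains i where "i \<in> {1..CARD('n)}" "p i = x"
  using p_bij unfolding bij_betw_def by (metis UNIV_I imageE)

lemma path_bdiag: "b x x = 0"
proof -
  obtain i where "i \<in> {1..CARD('n)}" "p i = x" by (rule p_surj)
  then show ?thesis using b_nonedge[of i i] by auto
qed

lemma path_bnn: "0 \<le> b x y"
proof -
  obtain i where i: "i \<in> {1..CARD('n)}" "p i = x" by (rule p_surj)
  obtain k where k: "k \<in> {1..CARD('n)}" "p k = y" by (rule p_surj)
  show ?thesis
  proof (cases "k = i + 1")
    case True
    then show ?thesis using b_edge[of i] i k by force
  next
    case F1: False
    show ?thesis
    proof (cases "i = k + 1")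
      case True
      then have "b (p k) (p (k + 1)) > 0" using b_edge[of k] i k by force
      moreover have "b x y = b (p k) (p (k + 1))" using True i(2) k(2) b_sym[of x y] by simp
      ultimately show ?thesis by simp
    next
      case False
      then show ?thesis using b_nonedge[of i k] F1 i k by simp
    qed
  qed
qed

lemma path_total: "(\<Sum>x\<in>UNIV. \<Sum>y\<in>UNIV. b x y) = 2 * (\<Sum>i = 1..<CARD('n). b (p i) (p (i + 1)))"
proof -
  define N where "N = CARD('n)"
  define e where "e i = b (p i) (p (i + 1))" for i
  have pb: "bij_betw p {1..N} UNIV" using p_bij N_def by simp
  have inner: "(\<Sum>k\<in>{1..N}. b (p i) (p k)) = (if i < N then e i else 0) + (if 1 < i then e (i - 1) else 0)"
    if i: "i \<in> {1..N}" for i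
  proof -
    have "(\<Sum>k\<in>{1..N}. b (p i) (p k)) = (\<Sum>k\<in>{1..N}. (if k = i + 1 then b (p i) (p k) else 0) + (if k = i - 1 then b (p i) (p k) else 0))"
    proof (intro sum.cong refl)
      fix k assume k: "k \<in> {1..N}"
      show "b (p i) (p k) = (if k = i + 1 then b (p i) (p k) else 0) + (if k = i - 1 then b (p i) (p k) else 0)"
        using b_nonedge[of i k] i k N_def by auto
    qed
    also have "\<dots> = (if i + 1 \<in> {1..N} then b (p i) (p (i + 1)) else 0) + (if i - 1 \<in> {1..N} then b (p i) (p (i - 1)) else 0)"
      by (simp add: sum.distrib sum.delta')
    also have "\<dots> = (if i < N then e i else 0) + (if 1 < i then e (i - 1) else 0)"
      using i b_sym[of "p i" "p (i - 1)"] by (auto simp: e_def)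
    finally show ?thesis .
  qed
  have "(\<Sum>x\<in>UNIV. \<Sum>y\<in>UNIV. b x y) = (\<Sum>i\<in>{1..N}. \<Sum>y\<in>UNIV. b (p i) y)"
    using sum.reindex_bij_betw[OF pb, of "\<lambda>x. \<Sum>y\<in>UNIV. b x y"] by simp
  also have "\<dots> = (\<Sum>i\<in>{1..N}. \<Sum>k\<in>{1..N}. b (p i) (p k))"
  proof (intro sum.cong refl)
    fix i show "(\<Sum>y\<in>UNIV. b (p i) y) = (\<Sum>k\<in>{1..N}. b (p i) (p k))"
      using sum.reindex_bij_betw[OF pb, of "b (p i)"] by simp
  qed
  also have "\<dots> = (\<Sum>i\<in>{1..N}. (if i < N then e i else 0)) + (\<Sum>i\<in>{1..N}. (if 1 < i then e (i - 1) else 0))"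
  proof -
    have "(\<Sum>i\<in>{1..N}. \<Sum>k\<in>{1..N}. b (p i) (p k)) = (\<Sum>i\<in>{1..N}. (if i < N then e i else 0) + (if 1 < i then e (i - 1) else 0))"
      by (intro sum.cong refl inner)
    also have "\<dots> = (\<Sum>i\<in>{1..N}. (if i < N then e i else 0)) + (\<Sum>i\<in>{1..N}. (if 1 < i then e (i - 1) else 0))"
      by (rule sum.distrib)
    finally show ?thesis .
  qed
  also have "(\<Sum>i\<in>{1..N}. (if i < N then e i else 0)) = (\<Sum>i = 1..<N. e i)"
  proof -
    have ins: "{1..N} = insert N {1..<N}" using N2 N_def by auto
    have "(\<Sum>i\<in>{1..N}. (if i < N then e i else 0)) = (\<Sum>i\<in>{1..<N}. (if i < N then e i else 0))"
      unfolding ins by simp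
    also have "\<dots> = (\<Sum>i = 1..<N. e i)" by (intro sum.cong refl) auto
    finally show ?thesis .
  qed
  also have "(\<Sum>i\<in>{1..N}. (if 1 < i then e (i - 1) else 0)) = (\<Sum>i = 1..<N. e i)"
  proof -
    define M where "M = N - 1"
    have M: "N = Suc M" using N2 unfolding N_def M_def by simp
    have "(\<Sum>i\<in>{1..N}. (if 1 < i then e (i - 1) else 0)) = (\<Sum>i\<in>{Suc 1..Suc M}. e (i - 1))"
    proof -
      have ins: "{1..N} = insert 1 {Suc 1..Suc M}" using M N2 N_def by auto
      have "(\<Sum>i\<in>insert 1 {Suc 1..Suc M}. (if 1 < i then e (i - 1) else 0))
          = (if 1 < (1::nat) then e (1 - 1) else 0) + (\<Sum>i\<in>{Suc 1..Suc M}. (if 1 < i then e (i - 1) else 0))"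
        by (rule sum.insert) auto
      also have "\<dots> = (\<Sum>i\<in>{Suc 1..Suc M}. e (i - 1))"
        by (simp only: less_irrefl if_False add_0_left) (intro sum.cong refl, auto)
      finally show ?thesis unfolding ins .
    qed
    also have "\<dots> = (\<Sum>i\<in>{1..M}. e i)" unfolding sum.shift_bounds_cl_Suc_ivl by simp
    also have "{1..M} = {1..<N}" using M by auto
    finally show ?thesis .
  qed
  finally show ?thesis unfolding N_def e_def by simp
qed

lemma path_mean_pos: "(\<Sum>i = 1..<CARD('n). b (p i) (p (i + 1))) > 0"
proof -
  have "1 \<in> {1..<CARD('n)}" using N2 by auto
  moreover have "\<forall>x\<in>{1..<CARD('n)} - {1}. 0 \<le> b (p x) (p (x + 1))"
    using b_edge by (auto intro: less_imp_le)
  ultimately have "b (p 1) (p (1 + 1)) \<le> (\<Sum>i = 1..<CARD('n). b (p i) (p (i + 1)))"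
    by (intro member_le_sum) auto
  moreover have "b (p 1) (p (1 + 1)) > 0" using b_edge[of 1] N2 by simp
  ultimately show ?thesis by simp
qed

end

lemma scalar_Q:
  fixes cQ kQ mu Y1 Y2 Y3 :: real
  assumes D: "cQ + kQ * mu > 0" and W: "Y3 - 2 * mu * Y2 + mu^2 * Y1 \<ge> 0" and kQ: "kQ > 0" and cQ: "cQ > 0"
  shows "cQ * (kQ * mu^2 / (cQ + kQ * mu)^2) * Y1
        + (cQ * (cQ / (cQ + kQ * mu)^2) + kQ * (kQ * mu^2 / (cQ + kQ * mu)^2) - 1) * Y2
        + kQ * (cQ / (cQ + kQ * mu)^2) * Y3 \<ge> 0"
proof -
  define D2 where "D2 = (cQ + kQ * mu)^2"
  have D2p: "D2 > 0" unfolding D2_def using D by simp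
  have "cQ * (kQ * mu^2 / D2) * Y1 + (cQ * (cQ / D2) + kQ * (kQ * mu^2 / D2) - 1) * Y2 + kQ * (cQ / D2) * Y3
      = (kQ * cQ / D2) * (Y3 - 2 * mu * Y2 + mu^2 * Y1)"
  proof -
    define K where "K = kQ * cQ / D2"
    have D2e: "D2 = cQ*cQ + 2*cQ*kQ*mu + kQ*kQ*mu*mu" unfolding D2_def by (simp add: power2_eq_square algebra_simps)
    have c1: "cQ * (kQ * mu^2 / D2) = K * mu^2" unfolding K_def by simp
    have "cQ * (cQ / D2) + kQ * (kQ * mu^2 / D2) - 1 = (cQ*cQ + kQ*kQ*mu^2 - D2) / D2"
      using D2p by (simp add: field_simps)
    also have "cQ*cQ + kQ*kQ*mu^2 - D2 = - 2 * mu * (kQ * cQ)" unfolding D2e by (simp add: power2_eq_square algebra_simps)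
    finally have c2: "cQ * (cQ / D2) + kQ * (kQ * mu^2 / D2) - 1 = K * (- 2 * mu)" unfolding K_def by simp
    have c3: "kQ * (cQ / D2) = K" unfolding K_def by simp
    show ?thesis unfolding c1 c2 c3 by (simp add: K_def algebra_simps)
  qed
  also have "\<dots> \<ge> 0" using D2p kQ cQ W by simp
  finally show ?thesis unfolding D2_def .
qed

theorem theorem4:
  fixes b :: "'n::finite \<Rightarrow> 'n \<Rightarrow> real"
    and p :: "nat \<Rightarrow> 'n"
    and kP tauP kQ tauQ bbar alpha :: real
  assumes N2: "CARD('n) \<ge> 2"
    and p_bij: "bij_betw p {1..CARD('n)} UNIV"
    and b_sym: "\<And>x y. b x y = b y x"
    and b_edge: "\<And>i. 1 \<le> i \<Longrightarrow> i < CARD('n) \<Longrightarrow> b (p i) (p (i + 1)) > 0"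
    and b_nonedge: "\<And>i k. i \<in> {1..CARD('n)} \<Longrightarrow> k \<in> {1..CARD('n)} \<Longrightarrow>
                       k \<noteq> i + 1 \<Longrightarrow> i \<noteq> k + 1 \<Longrightarrow> b (p i) (p k) = 0"
    and pos: "kP > 0" "tauP > 0" "kQ > 0" "tauQ > 0" "alpha > 0"
    and bbar: "bbar \<ge> 0"
  shows "h2norm_sq
           (sysA kP tauP kQ tauQ (1 + 2 * kQ * bbar) (laplacian b))
           (sysB tauP tauQ)
           (sysC alpha (psd_sqrt (laplacian b)))
         \<le> ennreal (alpha / 2 * (real CARD('n) - 1) *
              (1 / kP + 1 / (tauQ * ((1 + 2 * kQ * bbar) /
                 (2 * ((\<Sum>i = 1..<CARD('n). b (p i) (p (i + 1))) / (real CARD('n) - 1))) + kQ))))"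
proof -
  define L where "L = laplacian b"
  define S where "S = psd_sqrt L"
  define cQ where "cQ = 1 + 2 * kQ * bbar"
  define E where "E = (\<Sum>i = 1..<CARD('n). b (p i) (p (i + 1)))"
  define NN where "NN = real CARD('n)"
  define mu where "mu = 2 * (E / (NN - 1))"
  define c where "c = 1 / tauP"
  define be where "be = alpha * tauP / (2 * kP)"
  define ga where "ga = alpha * tauQ / 2"
  define D where "D = cQ + kQ * mu"
  define pp where "pp = kQ * mu^2 / D^2"
  define qq where "qq = cQ / D^2"
  define f where "f z = mk (be *\<^sub>R (kP *\<^sub>R (L *v dl z) + c *\<^sub>R Pm (dl z) + Pm (om z)))
     (be *\<^sub>R (Pm (dl z) + (1/c) *\<^sub>R Pm (om z))) (ga *\<^sub>R (pp *\<^sub>R Pm (vv z) + qq *\<^sub>R (L *v vv z)))"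
    for z :: "real^('n+'n+'n)"
  have bdiag: "\<And>x. b x x = 0" using path_bdiag[OF N2 p_bij b_sym b_edge b_nonedge] .
  have bnn: "\<And>x y. 0 \<le> b x y" using path_bnn[OF N2 p_bij b_sym b_edge b_nonedge] .
  have Ep: "E > 0" unfolding E_def using path_mean_pos[OF N2 p_bij b_sym b_edge b_nonedge] .
  have total: "(\<Sum>x\<in>UNIV. \<Sum>y\<in>UNIV. b x y) = 2 * E"
    unfolding E_def using path_total[OF N2 p_bij b_sym b_edge b_nonedge] .
  have NN2: "NN \<ge> 2" unfolding NN_def using N2 by simp
  have mup: "mu > 0" unfolding mu_def using Ep NN2 by simp
  have cQp: "cQ \<ge> 1" unfolding cQ_def using pos bbar by simp
  have Dp: "D > 0" unfolding D_def using cQp mup pos by (simp add: add_pos_nonneg)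
  note LF = lap_sym[where b=b, OF b_sym bdiag bnn] lap_nonneg[where b=b, OF b_sym bdiag bnn] lap_Pm[where b=b, OF b_sym bdiag bnn]
     Pm_lap[where b=b, OF b_sym bdiag bnn] lap_trace[where b=b, OF b_sym bdiag bnn] lap_transpose[where b=b, OF b_sym bdiag bnn]
  have lsym: "u \<bullet> (L *v w) = (L *v u) \<bullet> w" for u w unfolding L_def by (rule LF(1))
  have lnn: "0 \<le> u \<bullet> (L *v u)" for u unfolding L_def by (rule LF(2))
  have lPm: "L *v Pm u = L *v u" for u unfolding L_def by (rule LF(3))
  have Pml: "Pm (L *v u) = L *v u" for u unfolding L_def by (rule LF(4))
  have ltr: "(\<Sum>j\<in>UNIV. axis j 1 \<bullet> (L *v axis j 1)) = 2 * E" unfolding L_def LF(5) total ..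
  have psdL: "psd L" unfolding psd_def L_def using LF(6) LF(2) by blast
  have Sp: "transpose S = S" "S ** S = L" using psd_sqrt_props[OF psdL] unfolding S_def by auto
  have Snorm: "(norm (S *v x))^2 = x \<bullet> (L *v x)" for x
  proof -
    have "(norm (S *v x))^2 = (S *v x) \<bullet> (S *v x)" by (rule power2_norm_eq_inner)
    also have "\<dots> = x \<bullet> (S *v (S *v x))" using transpose_symm[OF Sp(1)] unfolding symm_def by metis
    also have "\<dots> = x \<bullet> (L *v x)" by (simp add: matrix_vector_mul_assoc Sp(2))
    finally show ?thesis .
  qed
  have fexp: "u \<bullet> f w = be * (kP * (dl u \<bullet> (L *v dl w)) + c * (dl u \<bullet> Pm (dl w)) + dl u \<bullet> Pm (om w))
      + be * (om u \<bullet> Pm (dl w) + (1/c) * (om u \<bullet> Pm (om w)))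
      + ga * (pp * (vv u \<bullet> Pm (vv w)) + qq * (vv u \<bullet> (L *v vv w)))" for u w
    unfolding inner_blocks[of u "f w"] by (simp add: f_def inner_add_right)
  have lin: "linear f"
  proof (rule linearI)
    fix x y show "f (x + y) = f x + f y"
      by (simp add: f_def mk_add Pm_linear matrix_vector_right_distrib scaleR_add_right algebra_simps)
  next
    fix r x show "f (r *\<^sub>R x) = r *\<^sub>R f x"
      by (simp add: f_def mk_scale Pm_linear matrix_vector_mult_scaleR scaleR_add_right mult_ac)
  qed
  have psym: "x \<bullet> Pm y = y \<bullet> Pm x" for x y :: "real^'n"
    by (metis Pm_sym inner_commute)
  have lsym': "x \<bullet> (L *v y) = y \<bullet> (L *v x)" for x y
    by (metis lsym inner_commute)
  have fsym: "u \<bullet> f w = w \<bullet> f u" for u w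
  proof -
    have s1: "dl u \<bullet> (L *v dl w) = dl w \<bullet> (L *v dl u)" by (rule lsym')
    have s2: "dl u \<bullet> Pm (dl w) = dl w \<bullet> Pm (dl u)" by (rule psym)
    have s3: "dl u \<bullet> Pm (om w) = om w \<bullet> Pm (dl u)" by (rule psym)
    have s4: "om u \<bullet> Pm (dl w) = dl w \<bullet> Pm (om u)" by (rule psym)
    have s5: "om u \<bullet> Pm (om w) = om w \<bullet> Pm (om u)" by (rule psym)
    have s6: "vv u \<bullet> Pm (vv w) = vv w \<bullet> Pm (vv u)" by (rule psym)
    have s7: "vv u \<bullet> (L *v vv w) = vv w \<bullet> (L *v vv u)" by (rule lsym')
    show ?thesis unfolding fexp s1 s2 s3 s4 s5 s6 s7 by (simp add: algebra_simps)
  qed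
  have cpos: "c > 0" unfolding c_def using pos by simp
  have bep: "be > 0" unfolding be_def using pos by simp
  have gap: "ga > 0" unfolding ga_def using pos by simp
  have ppn: "pp \<ge> 0" unfolding pp_def using pos by simp
  have qqn: "qq \<ge> 0" unfolding qq_def using cQp by simp
  have fpos: "0 \<le> z \<bullet> f z" for z
  proof -
    define d where "d = dl z"
    define e where "e = om z"
    define v where "v = vv z"
    have i1: "Pm d \<bullet> Pm d = d \<bullet> Pm d" by (rule Pm_idem)
    have i2: "Pm d \<bullet> Pm e = d \<bullet> Pm e" by (rule Pm_idem)
    have i3: "Pm e \<bullet> Pm d = d \<bullet> Pm e" by (metis Pm_idem psym)
    have i4: "e \<bullet> Pm d = d \<bullet> Pm e" by (rule psym)
    have i5: "Pm e \<bullet> Pm e = e \<bullet> Pm e" by (rule Pm_idem)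
    have sq: "c * (d \<bullet> Pm d) + d \<bullet> Pm e + e \<bullet> Pm d + (1/c) * (e \<bullet> Pm e)
        = (1/c) * ((c *\<^sub>R Pm d + Pm e) \<bullet> (c *\<^sub>R Pm d + Pm e))"
      using cpos by (simp add: inner_add_left inner_add_right i1 i2 i3 i4 i5 field_simps)
    have t1: "0 \<le> be * (kP * (d \<bullet> (L *v d)) + c * (d \<bullet> Pm d) + d \<bullet> Pm e)
        + be * (e \<bullet> Pm d + (1/c) * (e \<bullet> Pm e))"
    proof -
      have "be * (kP * (d \<bullet> (L *v d)) + c * (d \<bullet> Pm d) + d \<bullet> Pm e) + be * (e \<bullet> Pm d + (1/c) * (e \<bullet> Pm e))
          = be * (kP * (d \<bullet> (L *v d)) + (c * (d \<bullet> Pm d) + d \<bullet> Pm e + e \<bullet> Pm d + (1/c) * (e \<bullet> Pm e)))"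
        by (simp add: algebra_simps)
      also have "\<dots> \<ge> 0" unfolding sq using bep cpos pos lnn[of d] by simp
      finally show ?thesis .
    qed
    have t2: "0 \<le> ga * (pp * (v \<bullet> Pm v) + qq * (v \<bullet> (L *v v)))"
    proof -
      have "v \<bullet> Pm v = Pm v \<bullet> Pm v" by (simp add: Pm_idem)
      then have "v \<bullet> Pm v \<ge> 0" by simp
      then show ?thesis using gap ppn qqn lnn[of v] by simp
    qed
    show ?thesis unfolding fexp using t1 t2 unfolding d_def e_def v_def by linarith
  qed
  have flyap: "2 * ((sysA kP tauP kQ tauQ cQ L *v z) \<bullet> f z) + (norm (sysC alpha S *v z))^2 \<le> 0" for z
  proof -
    define d where "d = dl z"
    define e where "e = om z"
    define v where "v = vv z"
    define Az where "Az = sysA kP tauP kQ tauQ cQ L *v z"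
    have bA: "dl Az = e" "om Az = - (kP / tauP) *\<^sub>R (L *v d) - (1 / tauP) *\<^sub>R e"
        "vv Az = - (cQ / tauQ) *\<^sub>R v - (kQ / tauQ) *\<^sub>R (L *v v)"
      unfolding Az_def d_def e_def v_def by (rule sysA_blocks)+
    have r1: "(L *v d) \<bullet> Pm d = d \<bullet> (L *v d)" by (metis Pm_sym Pml inner_commute)
    have r2: "(L *v d) \<bullet> Pm e = e \<bullet> (L *v d)" by (metis Pm_sym Pml inner_commute)
    have r3: "(L *v v) \<bullet> Pm v = v \<bullet> (L *v v)" by (metis Pm_sym Pml inner_commute)
    define X1 where "X1 = d \<bullet> (L *v d)"
    define X2 where "X2 = e \<bullet> (L *v d)"
    define X3 where "X3 = e \<bullet> Pm d"
    define X4 where "X4 = e \<bullet> Pm e"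
    define Y1 where "Y1 = v \<bullet> Pm v"
    define Y2 where "Y2 = v \<bullet> (L *v v)"
    define Y3 where "Y3 = (L *v v) \<bullet> (L *v v)"
    have ex: "Az \<bullet> f z = be * (kP * X2 + c * X3 + X4)
       + be * (- (kP / tauP) * X1 - (1 / tauP) * X3 + (1/c) * (- (kP / tauP) * X2 - (1 / tauP) * X4))
       + ga * (pp * (- (cQ / tauQ) * Y1 - (kQ / tauQ) * Y2) + qq * (- (cQ / tauQ) * Y2 - (kQ / tauQ) * Y3))"
      unfolding fexp bA X1_def X2_def X3_def X4_def Y1_def Y2_def Y3_def d_def[symmetric] e_def[symmetric] v_def[symmetric]
      by (simp add: inner_diff_left r1 r2 r3)
    have Cn: "(norm (sysC alpha S *v z))^2 = alpha * (X1 + Y2)"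
      using sysC_normsq[of alpha S z] pos unfolding Snorm X1_def Y2_def d_def v_def by simp
    have W: "Y3 - 2 * mu * Y2 + mu^2 * Y1 \<ge> 0"
    proof -
      have "0 \<le> (L *v v - mu *\<^sub>R Pm v) \<bullet> (L *v v - mu *\<^sub>R Pm v)" by simp
      also have "\<dots> = Y3 - 2 * mu * Y2 + mu^2 * Y1"
      proof -
        have "Pm v \<bullet> (L *v v) = Y2" using r3 unfolding Y2_def by (metis inner_commute)
        moreover have "Pm v \<bullet> Pm v = Y1" unfolding Y1_def by (rule Pm_idem)
        ultimately show ?thesis using r3 unfolding Y2_def[symmetric] Y3_def
          by (simp add: inner_diff_left inner_diff_right power2_eq_square algebra_simps)
      qed
      finally show ?thesis .
    qed
    have Q: "cQ * pp * Y1 + (cQ * qq + kQ * pp - 1) * Y2 + kQ * qq * Y3 \<ge> 0"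
      using scalar_Q[of cQ kQ mu Y3 Y2 Y1] Dp[unfolded D_def] W pos cQp unfolding pp_def qq_def D_def
      by (simp add: mult.assoc)
    have key: "2 * (Az \<bullet> f z) + alpha * (X1 + Y2) = - alpha * (cQ * pp * Y1 + (cQ * qq + kQ * pp - 1) * Y2 + kQ * qq * Y3)"
      unfolding ex c_def be_def ga_def using pos by (simp add: field_simps)
    show ?thesis unfolding Az_def[symmetric] Cn key using Q pos by simp
  qed
  have hb: "h2norm_sq (sysA kP tauP kQ tauQ cQ L) (sysB tauP tauQ) (sysC alpha S)
      \<le> ennreal (\<Sum>c\<in>UNIV. (sysB tauP tauQ *v axis c 1) \<bullet> f (sysB tauP tauQ *v axis c 1))"
    by (rule h2_bound[OF lin fsym fpos flyap])
  have bnd: "(\<Sum>c\<in>UNIV. ((sysB tauP tauQ :: real^('n+'n)^('n+'n+'n)) *v axis c 1) \<bullet> f (sysB tauP tauQ *v axis c 1))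
     \<le> alpha / 2 * (real CARD('n) - 1) *
              (1 / kP + 1 / (tauQ * ((1 + 2 * kQ * bbar) /
                 (2 * ((\<Sum>i = 1..<CARD('n). b (p i) (p (i + 1))) / (real CARD('n) - 1))) + kQ)))"
  proof -
    have Pm0: "Pm (0::real^'n) = 0" by (simp add: Pm_def sv_def)
    have col1: "((sysB tauP tauQ :: real^('n+'n)^('n+'n+'n)) *v axis (Inl j) 1) \<bullet> f (sysB tauP tauQ *v axis (Inl j) 1)
        = be * ((1/c) * ((1/tauP) * (1/tauP) * (1 - 1/NN)))" for j
      unfolding sysB_cols fexp by (simp add: Pm0 Pm_linear Pm_axis NN_def)
    have col2: "((sysB tauP tauQ :: real^('n+'n)^('n+'n+'n)) *v axis (Inr j) 1) \<bullet> f (sysB tauP tauQ *v axis (Inr j) 1)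
        = ga * (pp * ((1/tauQ) * (1/tauQ) * (1 - 1/NN)) + qq * ((1/tauQ) * (1/tauQ) * (axis j 1 \<bullet> (L *v axis j 1))))" for j
      unfolding sysB_cols fexp by (simp add: Pm0 Pm_linear Pm_axis NN_def matrix_vector_mult_scaleR)
    have "(\<Sum>c\<in>UNIV. ((sysB tauP tauQ :: real^('n+'n)^('n+'n+'n)) *v axis c 1) \<bullet> f (sysB tauP tauQ *v axis c 1))
        = NN * (be * ((1/c) * ((1/tauP) * (1/tauP) * (1 - 1/NN))))
          + ga * (pp * ((1/tauQ) * (1/tauQ) * (1 - 1/NN)) * NN + qq * ((1/tauQ) * (1/tauQ) * (2 * E)))"
    proof -
      define K1 where "K1 = ga * (pp * ((1/tauQ) * (1/tauQ) * (1 - 1/NN)))"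
      define K2 where "K2 = ga * qq * ((1/tauQ) * (1/tauQ))"
      have c2: "ga * (pp * ((1/tauQ) * (1/tauQ) * (1 - 1/NN)) + qq * ((1/tauQ) * (1/tauQ) * (axis j 1 \<bullet> (L *v axis j 1))))
          = K1 + K2 * (axis j 1 \<bullet> (L *v axis j 1))" for j :: 'n
        unfolding K1_def K2_def by (simp add: algebra_simps)
      have "(\<Sum>j\<in>(UNIV::'n set). K1 + K2 * (axis j 1 \<bullet> (L *v axis j 1))) = NN * K1 + K2 * (2 * E)"
        unfolding sum.distrib sum_distrib_left[symmetric] ltr by (simp add: NN_def)
      then show ?thesis unfolding sum_UNIV_Plus col1 col2 c2
        by (simp add: NN_def K1_def K2_def algebra_simps)
    qed
    also have "\<dots> = alpha / 2 * (NN - 1) * (1 / kP + 1 / (tauQ * (cQ / mu + kQ)))"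
    proof -
      have NNp: "NN > 1" using NN2 by simp
      have E2: "2 * E = (NN - 1) * mu" unfolding mu_def using NNp by simp
      have pq: "pp + qq * mu = mu / D"
      proof -
        have "pp + qq * mu = (kQ * mu^2 + cQ * mu) / D^2" unfolding pp_def qq_def by (simp add: add_divide_distrib)
        also have "kQ * mu^2 + cQ * mu = mu * D" unfolding D_def by (simp add: power2_eq_square algebra_simps)
        also have "mu * D / D^2 = mu / D" using Dp by (simp add: power2_eq_square)
        finally show ?thesis .
      qed
      have p1: "NN * (be * ((1/c) * ((1/tauP) * (1/tauP) * (1 - 1/NN)))) = alpha / 2 * (NN - 1) * (1 / kP)"
        unfolding be_def c_def using pos NNp by (simp add: field_simps)
      have "ga * (pp * ((1/tauQ) * (1/tauQ) * (1 - 1/NN)) * NN + qq * ((1/tauQ) * (1/tauQ) * (2 * E)))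
          = ga * (1/tauQ) * (1/tauQ) * (NN - 1) * (pp + qq * mu)"
      proof -
        have "NN \<noteq> 0" "tauQ \<noteq> 0" using NNp pos by auto
        then show ?thesis unfolding E2 by (simp add: field_simps)
      qed
      also have "\<dots> = alpha / 2 * (NN - 1) * (1 / (tauQ * (cQ / mu + kQ)))"
        unfolding pq ga_def D_def using pos mup cQp by (simp add: field_simps)
      finally show ?thesis using p1 by (simp add: algebra_simps)
    qed
    also have "\<dots> = alpha / 2 * (real CARD('n) - 1) *
              (1 / kP + 1 / (tauQ * ((1 + 2 * kQ * bbar) /
                 (2 * ((\<Sum>i = 1..<CARD('n). b (p i) (p (i + 1))) / (real CARD('n) - 1))) + kQ)))"
      unfolding mu_def E_def NN_def cQ_def ..
    finally show ?thesis by simp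
  qed
  show ?thesis
    using order_trans[OF hb ennreal_leI[OF bnd]] unfolding L_def S_def cQ_def .
qed

end
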